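(* Let $\mathbf Q\in\mathbb R^{m\times d}$, $\mathbf K,\mathbf V\in\mathbb R^{n\times d}$ and $\beta>0$, and let $\mathbf A$, $\mathbf D$, $\mathbf O$ be as in the context. Let $\widehat{\mathbf A}\in\mathbb R^{m\times n}$ be any approximation to $\mathbf A$, let $\widehat{\mathbf D}=\mathrm{diag}(\widehat{\mathbf A}\mathbf 1_n)$, and let $\widehat{\mathbf O}\defeq\mathrm{clip}(\widehat{\mathbf D}^{-1}\widehat{\mathbf A}\mathbf V,\mathbf v_{\min},\mathbf v_{\max})$, where $(\mathbf v_{\min})_j=\min_{l\in[n]}\mathbf V_{lj}$ and $(\mathbf v_{\max})_j=\max_{l\in[n]}\mathbf V_{lj}$. Then $$\|\mathbf O-\widehat{\mathbf O}\|_{\max}\le \|\mathbf V\|_{\max}\,\min\left(\frac{\frac{3}{\sqrt n}\|\mathbf A-\widehat{\mathbf A}\|_{2,\infty}}{\min_{i\in[m],j\in[n]}\mathbf A_{ij}},\,2\right).$$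
   Context: Queries $\mathbf Q\in\mathbb R^{m\times d}$ have rows $\mathbf q_1,\dots,\mathbf q_m$; keys $\mathbf K\in\mathbb R^{n\times d}$ have rows $\mathbf k_1,\dots,\mathbf k_n$; values $\mathbf V\in\mathbb R^{n\times d}$ have rows $\mathbf v_1,\dots,\mathbf v_n$. The attention matrix is $\mathbf A\in\mathbb R^{m\times n}$ with $\mathbf A_{il}=\exp(\beta\langle\mathbf q_i,\mathbf k_l\rangle)$, $\mathbf D=\mathrm{diag}(\mathbf A\mathbf 1_n)$, and the softmax matrix is $\mathbf O=\mathbf D^{-1}\mathbf A\mathbf V$. $\mathrm{clip}(\mathbf M,\mathbf a,\mathbf b)$ clips each entry $\mathbf M_{ij}$ to the interval $[\mathbf a_j,\mathbf b_j]$. Norms: $\|\mathbf M\|_{\max}=\max_{i,j}|\mathbf M_{ij}|$ and $\|\mathbf M\|_{2,\infty}=\max_i\|\mathbf M_{i,:}\|_2$ (maximal Euclidean row norm). *)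

theory Defs
  imports "HOL-Analysis.Analysis"
begin

text \<open>Matrices are rendered as real^'col^'row (row i of M is M$i), with finite index types
  'm (queries), 'n (keys/values), 'd (feature dimension).\<close>

definition attn_matrix :: "real \<Rightarrow> real^'d^'m \<Rightarrow> real^'d^'n \<Rightarrow> real^'n^'m" where
  "attn_matrix \<beta> Q K = (\<chi> i l. exp (\<beta> * (Q$i \<bullet> K$l)))"

definition diag_rowsum :: "real^'n^'m \<Rightarrow> real^'m^'m" where
  "diag_rowsum A = (\<chi> i k. if i = k then (A *v (\<chi> l. 1)) $ i else 0)"

text \<open>Inverse of a diagonal matrix: entrywise inverse of the diagonal
  (with the HOL convention inverse 0 = 0).\<close>
definition diag_inv :: "real^'m^'m \<Rightarrow> real^'m^'m" where
  "diag_inv D = (\<chi> i k. if i = k then inverse (D$i$i) else 0)"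

definition softmax_out :: "real^'n^'m \<Rightarrow> real^'d^'n \<Rightarrow> real^'d^'m" where
  "softmax_out A V = (diag_inv (diag_rowsum A) ** A) ** V"

definition clip :: "real^'d^'m \<Rightarrow> real^'d \<Rightarrow> real^'d \<Rightarrow> real^'d^'m" where
  "clip M a b = (\<chi> i j. max (a$j) (min (b$j) (M$i$j)))"

definition col_min :: "real^'d^'n \<Rightarrow> real^'d" where
  "col_min V = (\<chi> j. Min (range (\<lambda>l. V$l$j)))"

definition col_max :: "real^'d^'n \<Rightarrow> real^'d" where
  "col_max V = (\<chi> j. Max (range (\<lambda>l. V$l$j)))"

definition max_norm :: "real^'c^'r \<Rightarrow> real" where
  "max_norm M = Max {\<bar>M$i$j\<bar> | i j. True}"

definition norm_2inf :: "real^'c^'r \<Rightarrow> real" where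
  "norm_2inf M = Max (range (\<lambda>i. norm (M$i)))"

definition min_entry :: "real^'c^'r \<Rightarrow> real" where
  "min_entry M = Min {M$i$j | i j. True}"

end

theory Submission
  imports Defs
begin

lemma arith_core:
  fixes S Ep Em Wp Wm M d :: real
  assumes S: "S > 0" and "Ep \<ge> 0" "Em \<ge> 0" "Wp \<ge> 0" "Wm \<ge> 0" "Wp + Wm \<le> 2*M"
    and T: "S - Ep + Em > 0"
    and d1: "d \<le> Wp" and d2: "d \<le> (Em*Wp + Ep*Wm) / (S - Ep + Em)"
  shows "d \<le> 3*M*(Ep+Em)/S"
proof (cases "Wp \<le> 3*M*(Ep+Em)/S")
  case True then show ?thesis using d1 by linarith
next
  case False
  define r where "r = (Ep+Em)/S"
  have r0: "r \<ge> 0" using assms by (simp add: r_def)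
  have M0: "M \<ge> 0" using assms by linarith
  have Wpr: "Wp > 3*M*r" using False by (simp add: r_def)
  have "Em*Wp + Ep*Wm \<le> Em*Wp + Ep*(2*M - Wp)"
    using assms by (intro add_left_mono mult_left_mono) auto
  also have "\<dots> = (Wp - 3*M*r)*(Em-Ep) + 3*M*r*(Em - Ep) + 2*M*Ep" by algebra
  also have "\<dots> \<le> 3*M*(Ep+Em) + 3*M*r*(Em - Ep)"
  proof (cases "Em \<ge> Ep")
    case True
    have "(Wp - 3*M*r)*(Em-Ep) \<le> (2*M)*(Em-Ep)"
      using True assms mult_nonneg_nonneg[OF M0 r0] by (intro mult_right_mono) auto
    moreover have "2*M*(Em-Ep) + 2*M*Ep \<le> 3*M*(Ep+Em)"
      using mult_nonneg_nonneg[OF M0 \<open>Ep \<ge> 0\<close>] mult_nonneg_nonneg[OF M0 \<open>Em \<ge> 0\<close>]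
      by (simp add: algebra_simps)
    ultimately show ?thesis by linarith
  next
    case False
    have "(Wp - 3*M*r)*(Em-Ep) \<le> 0" using False Wpr by (intro mult_nonneg_nonpos) auto
    moreover have "2*M*Ep \<le> 3*M*(Ep+Em)"
      using mult_nonneg_nonneg[OF M0 \<open>Ep \<ge> 0\<close>] mult_nonneg_nonneg[OF M0 \<open>Em \<ge> 0\<close>]
      by (simp add: algebra_simps)
    ultimately show ?thesis by linarith
  qed
  also have "\<dots> = 3*M*r*(S - Ep + Em)" using S by (simp add: r_def field_simps)
  finally have "Em*Wp + Ep*Wm \<le> 3*M*r*(S - Ep + Em)" .
  then have "(Em*Wp + Ep*Wm) / (S - Ep + Em) \<le> 3*M*r" using T by (simp add: divide_simps)
  then show ?thesis using d2 by (simp add: r_def)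
qed

lemma row_bound:
  fixes a b v :: "'n::finite \<Rightarrow> real" and lo hi M :: real
  assumes apos: "\<And>l. a l > 0" and vlo: "\<And>l. lo \<le> v l" and vhi: "\<And>l. v l \<le> hi"
    and lM: "\<bar>lo\<bar> \<le> M" and hM: "\<bar>hi\<bar> \<le> M"
  shows "\<bar>(\<Sum>l\<in>UNIV. a l * v l) / (\<Sum>l\<in>UNIV. a l)
          - max lo (min hi ((\<Sum>l\<in>UNIV. b l * v l) / (\<Sum>l\<in>UNIV. b l)))\<bar>
         \<le> M * min (3 * (\<Sum>l\<in>UNIV. \<bar>a l - b l\<bar>) / (\<Sum>l\<in>UNIV. a l)) 2"
proof -
  define S where "S = (\<Sum>l\<in>UNIV. a l)"
  define T where "T = (\<Sum>l\<in>UNIV. b l)"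
  define Ov where "Ov = (\<Sum>l\<in>UNIV. a l * v l) / S"
  define x where "x = (\<Sum>l\<in>UNIV. b l * v l) / T"
  define E1 where "E1 = (\<Sum>l\<in>UNIV. \<bar>a l - b l\<bar>)"
  define Oh where "Oh = max lo (min hi x)"
  have S0: "S > 0" unfolding S_def using apos by (simp add: sum_pos)
  have "(\<Sum>l\<in>UNIV. a l * lo) \<le> (\<Sum>l\<in>UNIV. a l * v l)"
    using apos vlo by (intro sum_mono mult_left_mono) (auto intro: less_imp_le)
  then have "lo * S \<le> (\<Sum>l\<in>UNIV. a l * v l)" by (simp add: S_def sum_distrib_left mult.commute)
  then have Olo: "lo \<le> Ov" using S0 by (simp add: Ov_def pos_le_divide_eq)
  have "(\<Sum>l\<in>UNIV. a l * v l) \<le> (\<Sum>l\<in>UNIV. a l * hi)"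
    using apos vhi by (intro sum_mono mult_left_mono) (auto intro: less_imp_le)
  then have "(\<Sum>l\<in>UNIV. a l * v l) \<le> hi * S" by (simp add: S_def sum_distrib_left mult.commute)
  then have Ohi: "Ov \<le> hi" using S0 by (simp add: Ov_def pos_divide_le_eq)
  have lohi: "lo \<le> hi" using Olo Ohi by linarith
  have triv: "\<bar>Ov - Oh\<bar> \<le> M * 2" using Olo Ohi lohi lM hM unfolding Oh_def by (auto simp: abs_le_iff)
  have main: "\<bar>Ov - Oh\<bar> \<le> M * (3 * E1 / S)" if small: "3 * E1 / S < 2"
  proof -
    define e where "e l = a l - b l" for l
    define Ep where "Ep = (\<Sum>l\<in>UNIV. max (e l) 0)"
    define Em where "Em = (\<Sum>l\<in>UNIV. max (- e l) 0)"
    define w where "w l = v l - Ov" for l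
    have Ep0: "Ep \<ge> 0" unfolding Ep_def by (intro sum_nonneg) auto
    have Em0: "Em \<ge> 0" unfolding Em_def by (intro sum_nonneg) auto
    have E1eq: "E1 = Ep + Em" unfolding E1_def Ep_def Em_def e_def
      by (simp add: sum.distrib[symmetric]) (intro sum.cong; simp add: abs_if)
    have Teq: "T = S - Ep + Em" unfolding T_def S_def Ep_def Em_def
      by (simp add: sum.distrib[symmetric] sum_subtractf[symmetric] e_def) (intro sum.cong; simp add: abs_if)
    have "E1 < S" using small S0 by (simp add: divide_simps)
    then have T0: "T > 0" using Teq E1eq Ep0 Em0 by linarith
    have OS: "Ov * S = (\<Sum>l\<in>UNIV. a l * v l)" using S0 by (simp add: Ov_def)
    have xT: "x * T = (\<Sum>l\<in>UNIV. b l * v l)" using T0 by (simp add: x_def)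
    have saw: "(\<Sum>l\<in>UNIV. a l * w l) = 0"
    proof -
      have "(\<Sum>l\<in>UNIV. a l * w l) = (\<Sum>l\<in>UNIV. a l * v l) - Ov * S"
        by (simp add: w_def right_diff_distrib sum_subtractf S_def sum_distrib_left mult.commute)
      then show ?thesis using OS by simp
    qed
    have sbw: "(\<Sum>l\<in>UNIV. b l * w l) = (x - Ov) * T"
    proof -
      have "(\<Sum>l\<in>UNIV. b l * w l) = (\<Sum>l\<in>UNIV. b l * v l) - Ov * T"
        by (simp add: w_def right_diff_distrib sum_subtractf T_def sum_distrib_left mult.commute)
      then show ?thesis using xT by (simp add: algebra_simps)
    qed
    have sew: "(\<Sum>l\<in>UNIV. e l * w l) = - ((x - Ov) * T)"
      using saw sbw by (simp add: e_def left_diff_distrib sum_subtractf)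
    have wl: "- (Ov - lo) \<le> w l \<and> w l \<le> hi - Ov" for l using vlo[of l] vhi[of l] by (simp add: w_def)
    have b1: "(\<Sum>l\<in>UNIV. - e l * w l) \<le> Em * (hi - Ov) + Ep * (Ov - lo)"
    proof -
      have "(\<Sum>l\<in>UNIV. - e l * w l) \<le> (\<Sum>l\<in>UNIV. max (- e l) 0 * (hi - Ov) + max (e l) 0 * (Ov - lo))"
      proof (intro sum_mono)
        fix l
        show "- e l * w l \<le> max (- e l) 0 * (hi - Ov) + max (e l) 0 * (Ov - lo)"
        proof (cases "e l \<ge> 0")
          case True
          have "e l * (- w l) \<le> e l * (Ov - lo)" using wl[of l] True
            by (intro mult_left_mono) auto
          then have "- e l * w l \<le> e l * (Ov - lo)" by simp
          then show ?thesis using True by simp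
        next
          case False
          then have "- e l * w l \<le> - e l * (hi - Ov)" using wl[of l]
            by (intro mult_left_mono) auto
          then show ?thesis using False by simp
        qed
      qed
      also have "\<dots> = Em * (hi - Ov) + Ep * (Ov - lo)"
        by (simp add: Em_def Ep_def sum.distrib sum_distrib_right)
      finally show ?thesis .
    qed
    have b2: "(\<Sum>l\<in>UNIV. e l * w l) \<le> Ep * (hi - Ov) + Em * (Ov - lo)"
    proof -
      have "(\<Sum>l\<in>UNIV. e l * w l) \<le> (\<Sum>l\<in>UNIV. max (e l) 0 * (hi - Ov) + max (- e l) 0 * (Ov - lo))"
      proof (intro sum_mono)
        fix l
        show "e l * w l \<le> max (e l) 0 * (hi - Ov) + max (- e l) 0 * (Ov - lo)"
        proof (cases "e l \<ge> 0")
          case True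
          then have "e l * w l \<le> e l * (hi - Ov)" using wl[of l]
            by (intro mult_left_mono) auto
          then show ?thesis using True by simp
        next
          case False
          have "(- e l) * (- w l) \<le> (- e l) * (Ov - lo)" using wl[of l] False
            by (intro mult_left_mono) auto
          then have "e l * w l \<le> - e l * (Ov - lo)" by simp
          then show ?thesis using False by simp
        qed
      qed
      also have "\<dots> = Ep * (hi - Ov) + Em * (Ov - lo)"
        by (simp add: Em_def Ep_def sum.distrib sum_distrib_right)
      finally show ?thesis .
    qed
    have M2: "(hi - Ov) + (Ov - lo) \<le> 2 * M" using lM hM by (auto simp: abs_le_iff)
    show ?thesis
    proof (cases "x \<ge> Ov")
      case True
      have d1: "\<bar>Ov - Oh\<bar> \<le> hi - Ov" and d2: "\<bar>Ov - Oh\<bar> \<le> x - Ov"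
        using True Olo Ohi unfolding Oh_def by (simp_all add: abs_le_iff)
      have "x - Ov = (\<Sum>l\<in>UNIV. - e l * w l) / T" using sew T0 by (simp add: sum_negf)
      then have "x - Ov \<le> (Em * (hi - Ov) + Ep * (Ov - lo)) / T" using b1 T0 by (simp add: divide_right_mono)
      then have d3: "\<bar>Ov - Oh\<bar> \<le> (Em * (hi - Ov) + Ep * (Ov - lo)) / (S - Ep + Em)"
        using d2 Teq by simp
      have "\<bar>Ov - Oh\<bar> \<le> 3*M*(Ep+Em)/S"
        by (rule arith_core[OF S0 Ep0 Em0 _ _ M2 _ d1 d3]) (use Olo Ohi Teq T0 in simp_all)
      then show ?thesis using E1eq by (simp add: algebra_simps)
    next
      case False
      have d1: "\<bar>Ov - Oh\<bar> \<le> Ov - lo" and d2: "\<bar>Ov - Oh\<bar> \<le> Ov - x"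
        using False Olo Ohi unfolding Oh_def by (simp_all add: abs_le_iff)
      have "Ov - x = (\<Sum>l\<in>UNIV. e l * w l) / T" using sew T0 by simp
      then have "Ov - x \<le> (Ep * (hi - Ov) + Em * (Ov - lo)) / T" using b2 T0 by (simp add: divide_right_mono)
      then have d3: "\<bar>Ov - Oh\<bar> \<le> (Em * (Ov - lo) + Ep * (hi - Ov)) / (S - Ep + Em)"
        using d2 Teq by (simp add: add.commute)
      have M2': "(Ov - lo) + (hi - Ov) \<le> 2 * M" using M2 by linarith
      have "\<bar>Ov - Oh\<bar> \<le> 3*M*(Ep+Em)/S"
        by (rule arith_core[OF S0 Ep0 Em0 _ _ M2' _ d1 d3]) (use Olo Ohi Teq T0 in simp_all)
      then show ?thesis using E1eq by (simp add: algebra_simps)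
    qed
  qed
  have M0: "M \<ge> 0" using lM by linarith
  have "\<bar>Ov - Oh\<bar> \<le> M * min (3 * E1 / S) 2"
  proof (cases "3 * E1 / S < 2")
    case True then show ?thesis using main by simp
  next
    case False then show ?thesis using triv by simp
  qed
  then show ?thesis by (simp add: Ov_def Oh_def x_def S_def T_def E1_def)
qed

lemma set_ij_eq: "{f i j | i j. True} = (\<lambda>(i,j). f i j) ` UNIV"
  by auto

lemma fin_ij: "finite {(f i j :: real) | (i::'r::finite) (j::'c::finite). True}"
  unfolding set_ij_eq by simp

lemma max_norm_ge: "\<bar>M$i$j\<bar> \<le> max_norm (M :: real^'c^'r)"
  unfolding max_norm_def by (rule Max_ge[OF fin_ij]) blast

lemma max_norm_le:
  assumes "\<And>i j. \<bar>M$i$j\<bar> \<le> c"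
  shows "max_norm (M :: real^'c^'r) \<le> c"
  unfolding max_norm_def by (rule Max.boundedI[OF fin_ij]) (use assms in auto)

lemma min_entry_le: "min_entry (M :: real^'c^'r) \<le> M$i$j"
  unfolding min_entry_def by (rule Min_le[OF fin_ij]) blast

lemma min_entry_in: "\<exists>i j. min_entry (M :: real^'c^'r) = M$i$j"
proof -
  have "min_entry M \<in> {M$i$j | i j. True}"
    unfolding min_entry_def by (rule Min_in[OF fin_ij]) blast
  then show ?thesis by blast
qed

lemma col_min_le: "col_min V $ j \<le> V$l$j"
  unfolding col_min_def by simp

lemma col_max_ge: "V$l$j \<le> col_max V $ j"
  unfolding col_max_def by simp

lemma col_min_abs: "\<bar>col_min V $ j\<bar> \<le> max_norm V"
proof -
  have "Min (range (\<lambda>l. V$l$j)) \<in> range (\<lambda>l. V$l$j)" by (rule Min_in) auto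
  then obtain l where "Min (range (\<lambda>l. V$l$j)) = V$l$j" unfolding image_iff by blast
  then have "col_min V $ j = V$l$j" unfolding col_min_def by simp
  then show ?thesis using max_norm_ge by metis
qed

lemma col_max_abs: "\<bar>col_max V $ j\<bar> \<le> max_norm V"
proof -
  have "Max (range (\<lambda>l. V$l$j)) \<in> range (\<lambda>l. V$l$j)" by (rule Max_in) auto
  then obtain l where "Max (range (\<lambda>l. V$l$j)) = V$l$j" unfolding image_iff by blast
  then have "col_max V $ j = V$l$j" unfolding col_max_def by simp
  then show ?thesis using max_norm_ge by metis
qed

lemma norm_2inf_ge: "norm (M$i) \<le> norm_2inf (M :: real^'c^'r)"
  unfolding norm_2inf_def by (rule Max_ge) auto

lemma l1_le: "(\<Sum>l\<in>UNIV. \<bar>x$l\<bar>) \<le> sqrt (real CARD('n)) * norm (x :: real^'n)"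
proof -
  have "(\<Sum>l\<in>UNIV. \<bar>x$l\<bar> * \<bar>1::real\<bar>) \<le> L2_set (\<lambda>l. x$l) UNIV * L2_set (\<lambda>l::'n. 1::real) UNIV"
    using L2_set_mult_ineq[where f="\<lambda>l. x$l" and g="\<lambda>l::'n. 1::real" and A=UNIV] by simp
  moreover have "L2_set (\<lambda>l. x$l) UNIV = norm x"
    unfolding norm_vec_def L2_set_def by simp
  moreover have "L2_set (\<lambda>l. 1::real) (UNIV::'n set) = sqrt (real CARD('n))"
    by (simp add: L2_set_constant)
  ultimately show ?thesis by (simp add: mult.commute)
qed

lemma softmax_entry:
  "softmax_out A V $ i $ j = (\<Sum>l\<in>UNIV. A$i$l * V$l$j) / (\<Sum>l\<in>UNIV. A$i$l)"
proof -
  have drs: "diag_rowsum A $ i $ i = (\<Sum>l\<in>UNIV. A$i$l)"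
    by (simp add: diag_rowsum_def matrix_vector_mult_def)
  have di: "(diag_inv (diag_rowsum A) ** A) $ i $ l = inverse (\<Sum>l\<in>UNIV. A$i$l) * A$i$l" for l
  proof -
    have "(diag_inv (diag_rowsum A) ** A) $ i $ l
       = (\<Sum>k\<in>UNIV. (if i = k then inverse (diag_rowsum A $ i $ i) else 0) * A$k$l)"
      unfolding diag_inv_def matrix_matrix_mult_def by simp
    also have "\<dots> = (\<Sum>k\<in>UNIV. if i = k then inverse (diag_rowsum A $ i $ i) * A$k$l else 0)"
      by (rule sum.cong) auto
    also have "\<dots> = inverse (\<Sum>l\<in>UNIV. A$i$l) * A$i$l" using drs by simp
    finally show ?thesis .
  qed
  have "softmax_out A V $ i $ j = (\<Sum>l\<in>UNIV. (inverse (\<Sum>l\<in>UNIV. A$i$l) * A$i$l) * V$l$j)"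
    unfolding softmax_out_def by (subst matrix_matrix_mult_def) (simp only: vec_lambda_beta di)
  also have "\<dots> = inverse (\<Sum>l\<in>UNIV. A$i$l) * (\<Sum>l\<in>UNIV. A$i$l * V$l$j)"
    by (simp add: sum_distrib_left mult.assoc)
  finally show ?thesis by (simp add: divide_inverse mult.commute)
qed
theorem lemma1:
  fixes Q :: "real^'d^'m" and K V :: "real^'d^'n" and Ahat :: "real^'n^'m" and \<beta> :: real
  assumes "\<beta> > 0"
  shows "max_norm (softmax_out (attn_matrix \<beta> Q K) V
            - clip (softmax_out Ahat V) (col_min V) (col_max V))
         \<le> max_norm V *
           min ((3 / sqrt (real CARD('n))) * norm_2inf (attn_matrix \<beta> Q K - Ahat)
                  / min_entry (attn_matrix \<beta> Q K)) 2"
proof -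
  define A where "A = attn_matrix \<beta> Q K"
  define N where "N = norm_2inf (A - Ahat)"
  define n where "n = real CARD('n)"
  define \<mu> where "\<mu> = min_entry A"
  define Mv where "Mv = max_norm V"
  have Apos: "A$i$l > 0" for i l by (simp add: A_def attn_matrix_def)
  have mu0: "\<mu> > 0" using min_entry_in[of A] Apos unfolding \<mu>_def by force
  have n0: "n > 0" by (simp add: n_def)
  have Mv0: "Mv \<ge> 0" unfolding Mv_def by (rule order_trans[OF abs_ge_zero max_norm_ge])
  have "\<bar>(softmax_out A V - clip (softmax_out Ahat V) (col_min V) (col_max V)) $ i $ j\<bar>
        \<le> Mv * min (3 / sqrt n * N / \<mu>) 2" for i j
  proof -
    define S where "S = (\<Sum>l\<in>UNIV. A$i$l)"
    define E1 where "E1 = (\<Sum>l\<in>UNIV. \<bar>A$i$l - Ahat$i$l\<bar>)"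
    have rb: "\<bar>(softmax_out A V - clip (softmax_out Ahat V) (col_min V) (col_max V)) $ i $ j\<bar>
        \<le> Mv * min (3 * E1 / S) 2"
    proof -
      have eq: "(softmax_out A V - clip (softmax_out Ahat V) (col_min V) (col_max V)) $ i $ j
        = (\<Sum>l\<in>UNIV. A$i$l * V$l$j) / (\<Sum>l\<in>UNIV. A$i$l)
          - max (col_min V $ j) (min (col_max V $ j) ((\<Sum>l\<in>UNIV. Ahat$i$l * V$l$j) / (\<Sum>l\<in>UNIV. Ahat$i$l)))"
        by (simp add: clip_def softmax_entry)
      show ?thesis unfolding eq S_def E1_def Mv_def
        by (rule row_bound[where a="\<lambda>l. A$i$l" and b="\<lambda>l. Ahat$i$l" and v="\<lambda>l. V$l$j"])
          (auto simp: Apos col_min_le col_max_ge col_min_abs col_max_abs)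
    qed
    have "E1 = (\<Sum>l\<in>UNIV. \<bar>(A - Ahat)$i$l\<bar>)" by (simp add: E1_def)
    also have "\<dots> \<le> sqrt n * norm ((A - Ahat)$i)" unfolding n_def by (rule l1_le)
    also have "\<dots> \<le> sqrt n * N" unfolding N_def using n0 by (intro mult_left_mono norm_2inf_ge) auto
    finally have E1le: "E1 \<le> sqrt n * N" .
    have E10: "E1 \<ge> 0" unfolding E1_def by (intro sum_nonneg) auto
    have "n * \<mu> = (\<Sum>l\<in>(UNIV::'n set). \<mu>)" by (simp add: n_def)
    also have "\<dots> \<le> S" unfolding S_def \<mu>_def by (intro sum_mono min_entry_le)
    finally have Sge: "n * \<mu> \<le> S" .
    have nmu: "n * \<mu> > 0" using n0 mu0 by simp
    have "E1 / S \<le> E1 / (n * \<mu>)" using E10 Sge nmu by (intro divide_left_mono) auto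
    also have "\<dots> \<le> sqrt n * N / (n * \<mu>)" using E1le nmu by (intro divide_right_mono) auto
    also have "\<dots> = N / (sqrt n * \<mu>)"
    proof -
      have sn: "sqrt n * sqrt n = n" using n0 by simp
      have "sqrt n > 0" using n0 by simp
      then show ?thesis using mu0 sn[symmetric] by (simp add: field_simps)
    qed
    finally have "E1 / S \<le> N / (sqrt n * \<mu>)" .
    then have "3 * (E1 / S) \<le> 3 * (N / (sqrt n * \<mu>))" by simp
    moreover have "3 / sqrt n * N / \<mu> = 3 * (N / (sqrt n * \<mu>))" by simp
    moreover have "3 * E1 / S = 3 * (E1 / S)" by simp
    ultimately have "3 * E1 / S \<le> 3 / sqrt n * N / \<mu>" by linarith
    then have "min (3 * E1 / S) 2 \<le> min (3 / sqrt n * N / \<mu>) 2" by (rule min.mono) simp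
    then have "Mv * min (3 * E1 / S) 2 \<le> Mv * min (3 / sqrt n * N / \<mu>) 2"
      using Mv0 by (rule mult_left_mono)
    then show ?thesis using rb by linarith
  qed
  then have "max_norm (softmax_out A V - clip (softmax_out Ahat V) (col_min V) (col_max V))
        \<le> Mv * min (3 / sqrt n * N / \<mu>) 2" by (rule max_norm_le)
  then show ?thesis by (simp add: A_def N_def n_def \<mu>_def Mv_def)
qed

end
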